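(* Let $X$ be a finitely triangulable space and $k\ge0$. Then the image $\{[H_k(f;\mathbb{k})]: f\in C(X,\mathbb{R}^n)\}$ of $C(X,\mathbb{R}^n)$ in $\mathbf{bg}_n$ is separable (with respect to the interleaving distance).
   Context: Fix a field $\mathbb{k}$ (of arbitrary cardinality). For continuous $f:X\to\mathbb{R}^n$, $H_k(f;\mathbb{k})$ is the $n$-parameter persistence module $s\mapsto H_k(\{x\in X:f(x)\ll s\};\mathbb{k})$ (singular homology, maps induced by inclusion), where $s\ll t$ means $s_i<t_i$ for all $i$. An $n$-parameter persistence module is a functor $\mathbf{R}^n\to\mathbf{Vect}_{\mathbb{k}}$ ($\mathbf{R}^n$ with componentwise order); q-tame if $V_{s,t}$ has finite rank for $s\ll t$; ephemeral if $V_{s,t}=0$ for $s\ll t$. The observable category is the Serre quotient of persistence modules by ephemeral ones; $\mathcal{Q}_n$ is the set of isomorphism classes of q-tame objects of it with the interleaving distance $d_I$ (infimum of $\varepsilon\ge0$ admitting $f:V\to W[\varepsilon]$, $g:W\to V[\varepsilon]$ with $g[\varepsilon]f$, $f[\varepsilon]g$ equal to the structure-map morphisms to the $2\varepsilon$-shifts; $V[\varepsilon]_s=V_{s+\varepsilon}$). A module is finitely presentable if it is a cokernel of a morphism between finite direct sums of modules $\mathsf P_s$ ($\mathbb{k}$ on $\{t\ge s\}$, $0$ elsewhere, identity structure maps). $\mathbf{bg}_n$ is the closure in $\mathcal{Q}_n$ of the classes of finitely presentable modules; the modules $H_k(f;\mathbb{k})$ define elements of $\mathbf{bg}_n$. 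*)

theory Defs
  imports "HOL-Analysis.Analysis" "HOL-Homology.Homology"
begin

definition finitely_triangulable :: "'e::euclidean_space itself \<Rightarrow> 'x topology \<Rightarrow> bool" where
  "finitely_triangulable E X \<longleftrightarrow>
     (\<exists>\<T> :: 'e set set. triangulation \<T> \<and> X homeomorphic_space subtopology euclidean (\<Union>\<T>))"

type_synonym ('x, 'k) kchain = "((nat \<Rightarrow> real) \<Rightarrow> 'x) \<Rightarrow> 'k"

definition kchains :: "nat \<Rightarrow> 'x topology \<Rightarrow> ('x, 'k::field) kchain set" where
  "kchains p X = {c. finite {\<sigma>. c \<sigma> \<noteq> 0} \<and> (\<forall>\<sigma>. c \<sigma> \<noteq> 0 \<longrightarrow> singular_simplex p X \<sigma>)}"

definition kbd :: "nat \<Rightarrow> ('x, 'k::field) kchain \<Rightarrow> ('x, 'k) kchain" where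
  "kbd p c = (if p = 0 then (\<lambda>_. 0) else
     (\<lambda>\<tau>. \<Sum>\<sigma>\<in>{\<sigma>. c \<sigma> \<noteq> 0}. \<Sum>i\<le>p. if singular_face p i \<sigma> = \<tau> then (-1) ^ i * c \<sigma> else 0))"

definition kcycles :: "nat \<Rightarrow> 'x topology \<Rightarrow> ('x, 'k::field) kchain set" where
  "kcycles p X = {c \<in> kchains p X. kbd p c = (\<lambda>_. 0)}"

definition kboundaries :: "nat \<Rightarrow> 'x topology \<Rightarrow> ('x, 'k::field) kchain set" where
  "kboundaries p X = kbd (Suc p) ` kchains (Suc p) X"

text \<open>A persistence module indexed by real^'n is represented by a pair (Z, B) of families of
subspaces of an ambient space of 'k-valued functions, B s \<subseteq> Z s, with V_s = Z s / B s
and structure maps induced by the identity. A natural transformation V \<rightarrow> W is encoded by a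
family of maps on representatives that induces well-defined linear maps of the quotients
and commutes with the structure maps (everything modulo the target's B).\<close>

definition qscale :: "'k::field \<Rightarrow> ('b \<Rightarrow> 'k) \<Rightarrow> ('b \<Rightarrow> 'k)" where
  "qscale c x = (\<lambda>b. c * x b)"

definition qadd :: "('b \<Rightarrow> 'k::field) \<Rightarrow> ('b \<Rightarrow> 'k) \<Rightarrow> ('b \<Rightarrow> 'k)" where
  "qadd x y = (\<lambda>b. x b + y b)"

definition qsub :: "('b \<Rightarrow> 'k::field) \<Rightarrow> ('b \<Rightarrow> 'k) \<Rightarrow> ('b \<Rightarrow> 'k)" where
  "qsub x y = (\<lambda>b. x b - y b)"

definition vle :: "real^'n \<Rightarrow> real^'n \<Rightarrow> bool" where
  "vle s t \<longleftrightarrow> (\<forall>i. s $ i \<le> t $ i)"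

definition pm_hom ::
  "(real^'n \<Rightarrow> ('b \<Rightarrow> 'k::field) set) \<Rightarrow> (real^'n \<Rightarrow> ('b \<Rightarrow> 'k) set) \<Rightarrow>
   (real^'n \<Rightarrow> ('c \<Rightarrow> 'k) set) \<Rightarrow> (real^'n \<Rightarrow> ('c \<Rightarrow> 'k) set) \<Rightarrow>
   (real^'n \<Rightarrow> ('b \<Rightarrow> 'k) \<Rightarrow> ('c \<Rightarrow> 'k)) \<Rightarrow> bool" where
  "pm_hom Z B Z' B' \<phi> \<longleftrightarrow>
     (\<forall>s. \<forall>x\<in>Z s. \<phi> s x \<in> Z' s) \<and>
     (\<forall>s. \<forall>x\<in>B s. \<phi> s x \<in> B' s) \<and>
     (\<forall>s. \<forall>x\<in>Z s. \<forall>y\<in>Z s. qsub (\<phi> s (qadd x y)) (qadd (\<phi> s x) (\<phi> s y)) \<in> B' s) \<and>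
     (\<forall>s c. \<forall>x\<in>Z s. qsub (\<phi> s (qscale c x)) (qscale c (\<phi> s x)) \<in> B' s) \<and>
     (\<forall>s t. vle s t \<longrightarrow> (\<forall>x\<in>Z s. qsub (\<phi> t x) (\<phi> s x) \<in> B' t))"

definition shiftv :: "real \<Rightarrow> real^'n \<Rightarrow> real^'n" where
  "shiftv e s = s + (\<chi> i. e)"

text \<open>V and W are e-interleaved: f : V \<rightarrow> W[e], g : W \<rightarrow> V[e] with g[e] f and f[e] g
equal to the structure maps V \<rightarrow> V[2e], W \<rightarrow> W[2e].\<close>
definition interleaved ::
  "real \<Rightarrow> (real^'n \<Rightarrow> ('b \<Rightarrow> 'k::field) set) \<times> (real^'n \<Rightarrow> ('b \<Rightarrow> 'k) set) \<Rightarrow>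
   (real^'n \<Rightarrow> ('c \<Rightarrow> 'k) set) \<times> (real^'n \<Rightarrow> ('c \<Rightarrow> 'k) set) \<Rightarrow> bool" where
  "interleaved e V W \<longleftrightarrow>
     (\<exists>f g. pm_hom (fst V) (snd V) (\<lambda>s. fst W (shiftv e s)) (\<lambda>s. snd W (shiftv e s)) f \<and>
            pm_hom (fst W) (snd W) (\<lambda>s. fst V (shiftv e s)) (\<lambda>s. snd V (shiftv e s)) g \<and>
            (\<forall>s. \<forall>x\<in>fst V s. qsub (g (shiftv e s) (f s x)) x \<in> snd V (shiftv (2 * e) s)) \<and>
            (\<forall>s. \<forall>y\<in>fst W s. qsub (f (shiftv e s) (g s y)) y \<in> snd W (shiftv (2 * e) s)))"

definition interleaving_dist ::
  "(real^'n \<Rightarrow> ('b \<Rightarrow> 'k::field) set) \<times> (real^'n \<Rightarrow> ('b \<Rightarrow> 'k) set) \<Rightarrow>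
   (real^'n \<Rightarrow> ('c \<Rightarrow> 'k) set) \<times> (real^'n \<Rightarrow> ('c \<Rightarrow> 'k) set) \<Rightarrow> ereal" where
  "interleaving_dist V W = Inf {ereal e | e. e \<ge> 0 \<and> interleaved e V W}"

definition sublevel :: "'x topology \<Rightarrow> ('x \<Rightarrow> real^'n) \<Rightarrow> real^'n \<Rightarrow> 'x set" where
  "sublevel X f s = {x \<in> topspace X. \<forall>i. f x $ i < s $ i}"

definition PH ::
  "'k::field itself \<Rightarrow> nat \<Rightarrow> 'x topology \<Rightarrow> ('x \<Rightarrow> real^'n) \<Rightarrow>
   (real^'n \<Rightarrow> ('x, 'k) kchain set) \<times> (real^'n \<Rightarrow> ('x, 'k) kchain set)" where
  "PH K k X f = ((\<lambda>s. kcycles k (subtopology X (sublevel X f s))),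
                 (\<lambda>s. kboundaries k (subtopology X (sublevel X f s))))"

end

theory Submission
  imports Defs "HOL-Library.Countable"
begin

datatype pexpr = PC rat | PV nat | PA pexpr pexpr | PM pexpr pexpr

instance pexpr :: countable by countable_datatype

fun peval :: "pexpr \<Rightarrow> 'e::euclidean_space \<Rightarrow> real" where
  "peval (PC q) x = of_rat q"
| "peval (PV i) x = x \<bullet> from_nat_into (Basis::'e set) i"
| "peval (PA p q) x = peval p x + peval q x"
| "peval (PM p q) x = peval p x * peval q x"

lemma peval_cont: "continuous_on S (peval p)"
  by (induction p) (auto intro!: continuous_intros)

lemma bounded_cont:
  assumes "compact S" "continuous_on S (g::_\<Rightarrow>real)"
  obtains B where "B \<ge> 0" "\<forall>x\<in>S. \<bar>g x\<bar> \<le> B"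
proof -
  have "bounded (g ` S)" using assms compact_continuous_image compact_imp_bounded by blast
  then obtain B where "\<forall>y\<in>g ` S. norm y \<le> B" by (auto simp: bounded_iff)
  then have "\<forall>x\<in>S. \<bar>g x\<bar> \<le> max B 0" by force
  then show ?thesis using that[of "max B 0"] by simp
qed

lemma mult_est:
  fixes a b c d B1 B2 dd :: real
  assumes "\<bar>a\<bar> \<le> B1" "\<bar>b\<bar> \<le> B2" "\<bar>a - c\<bar> < dd" "\<bar>b - d\<bar> < dd" "dd \<le> 1" "B1 \<ge> 0" "B2 \<ge> 0"
  shows "\<bar>a * b - c * d\<bar> \<le> dd * (B1 + B2 + 1)"
proof -
  have e1: "a * b - c * d = a * (b - d) + (a - c) * d" by (simp add: algebra_simps)
  have "\<bar>d\<bar> \<le> B2 + 1" using assms by linarith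
  have "\<bar>a * (b - d)\<bar> \<le> B1 * dd"
    unfolding abs_mult using assms by (intro mult_mono) auto
  moreover have "\<bar>(a - c) * d\<bar> \<le> dd * (B2 + 1)"
    unfolding abs_mult using assms \<open>\<bar>d\<bar> \<le> B2 + 1\<close> by (intro mult_mono) auto
  ultimately show ?thesis unfolding e1 by (simp add: algebra_simps)
qed

lemma peval_approx:
  fixes S :: "'e::euclidean_space set" and f :: "'e \<Rightarrow> real"
  assumes S: "compact S" and f: "continuous_on S f" and e: "e > 0"
  shows "\<exists>p. \<forall>x\<in>S. \<bar>f x - peval p x\<bar> < e"
proof -
  define R where "R = {g. continuous_on S g \<and> (\<forall>e>0. \<exists>p. \<forall>x\<in>S. \<bar>g x - peval p x\<bar> < e)}"
  interpret function_ring_on R S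
  proof
    show "compact S" by fact
  next
    fix g assume "g \<in> R" then show "continuous_on S g" by (simp add: R_def)
  next
    fix g h assume g: "g \<in> R" and h: "h \<in> R"
    show "(\<lambda>x. g x + h x) \<in> R" unfolding R_def
    proof (intro CollectI conjI allI impI)
      show "continuous_on S (\<lambda>x. g x + h x)" using g h by (auto simp: R_def intro!: continuous_intros)
      fix e :: real assume "e > 0"
      have ga: "\<forall>e>0. \<exists>p. \<forall>x\<in>S. \<bar>g x - peval p x\<bar> < e"
        and ha: "\<forall>e>0. \<exists>p. \<forall>x\<in>S. \<bar>h x - peval p x\<bar> < e" using g h by (simp_all add: R_def)
      obtain p where p: "\<forall>x\<in>S. \<bar>g x - peval p x\<bar> < e/2" using ga \<open>e > 0\<close> half_gt_zero by blast
      obtain q where q: "\<forall>x\<in>S. \<bar>h x - peval q x\<bar> < e/2" using ha \<open>e > 0\<close> half_gt_zero by blast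
      show "\<exists>p. \<forall>x\<in>S. \<bar>g x + h x - peval p x\<bar> < e"
      proof (rule exI[of _ "PA p q"], intro ballI)
        fix x assume "x \<in> S"
        then have "\<bar>g x - peval p x\<bar> < e/2" "\<bar>h x - peval q x\<bar> < e/2" using p q by auto
        then show "\<bar>g x + h x - peval (PA p q) x\<bar> < e" by (simp add: abs_less_iff) (smt (verit))
      qed
    qed
  next
    fix g h assume g: "g \<in> R" and h: "h \<in> R"
    show "(\<lambda>x. g x * h x) \<in> R" unfolding R_def
    proof (intro CollectI conjI allI impI)
      show "continuous_on S (\<lambda>x. g x * h x)" using g h by (auto simp: R_def intro!: continuous_intros)
      fix e :: real assume "e > 0"
      obtain B1 where B1: "B1 \<ge> 0" "\<forall>x\<in>S. \<bar>g x\<bar> \<le> B1" using bounded_cont[OF S] g by (auto simp: R_def)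
      obtain B2 where B2: "B2 \<ge> 0" "\<forall>x\<in>S. \<bar>h x\<bar> \<le> B2" using bounded_cont[OF S] h by (auto simp: R_def)
      define dd where "dd = min 1 (e / (B1 + B2 + 2))"
      have dd: "dd > 0" "dd \<le> 1" using \<open>e > 0\<close> B1 B2 by (auto simp: dd_def)
      have "dd * (B1 + B2 + 1) < e"
      proof -
        have "dd * (B1 + B2 + 1) \<le> (e / (B1 + B2 + 2)) * (B1 + B2 + 1)"
          using B1 B2 by (intro mult_right_mono) (auto simp: dd_def)
        also have "\<dots> < (e / (B1 + B2 + 2)) * (B1 + B2 + 2)"
          using B1 B2 \<open>e > 0\<close> by (intro mult_strict_left_mono) auto
        also have "\<dots> = e" using B1 B2 by simp
        finally show ?thesis .
      qed
      have ga: "\<forall>e>0. \<exists>p. \<forall>x\<in>S. \<bar>g x - peval p x\<bar> < e"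
        and ha: "\<forall>e>0. \<exists>p. \<forall>x\<in>S. \<bar>h x - peval p x\<bar> < e" using g h by (simp_all add: R_def)
      obtain p where p: "\<forall>x\<in>S. \<bar>g x - peval p x\<bar> < dd" using ga dd by blast
      obtain q where q: "\<forall>x\<in>S. \<bar>h x - peval q x\<bar> < dd" using ha dd by blast
      show "\<exists>p. \<forall>x\<in>S. \<bar>g x * h x - peval p x\<bar> < e"
      proof (rule exI[of _ "PM p q"], intro ballI)
        fix x assume "x \<in> S"
        have "\<bar>g x * h x - peval p x * peval q x\<bar> \<le> dd * (B1 + B2 + 1)"
          by (rule mult_est) (use B1 B2 p q dd \<open>x \<in> S\<close> in auto)
        then show "\<bar>g x * h x - peval (PM p q) x\<bar> < e" using \<open>dd * (B1 + B2 + 1) < e\<close> by simp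
      qed
    qed
  next
    fix c :: real
    show "(\<lambda>_. c) \<in> R" unfolding R_def
    proof (intro CollectI conjI allI impI)
      show "continuous_on S (\<lambda>_. c)" by simp
      fix e :: real assume "e > 0"
      then obtain r where r: "r \<in> \<rat>" "c - e < r" "r < c + e"
        using Rats_dense_in_real[of "c - e" "c + e"] by auto
      then obtain q where "r = of_rat q" by (auto elim: Rats_cases)
      then show "\<exists>p. \<forall>x\<in>S. \<bar>c - peval p x\<bar> < e"
        using r by (intro exI[of _ "PC q"]) auto
    qed
  next
    fix x y assume "x \<in> S" "y \<in> S" "x \<noteq> y"
    then obtain b where b: "b \<in> Basis" "x \<bullet> b \<noteq> y \<bullet> b" using euclidean_eqI[of x y] by blast
    have cB: "countable (Basis::'e set)" by (simp add: countable_finite)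
    obtain i where i: "from_nat_into (Basis::'e set) i = b"
      using from_nat_into_surj[OF cB b(1)] by blast
    have "peval (PV i) \<in> R" unfolding R_def
      by (auto intro!: exI[of _ "PV i"] continuous_intros)
    moreover have "peval (PV i) x \<noteq> peval (PV i) y" using b i by simp
    ultimately show "\<exists>f\<in>R. f x \<noteq> f y" by blast
  qed
  obtain g where g: "g \<in> R" "\<forall>x\<in>S. \<bar>f x - g x\<bar> < e/2"
    using Stone_Weierstrass_basic[OF f, of "e/2"] e by auto
  have ga: "\<forall>e>0. \<exists>p. \<forall>x\<in>S. \<bar>g x - peval p x\<bar> < e" using g by (simp add: R_def)
  obtain p where p: "\<forall>x\<in>S. \<bar>g x - peval p x\<bar> < e/2" using ga e half_gt_zero by blast
  show ?thesis
  proof (rule exI[of _ p], intro ballI)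
    fix x assume "x \<in> S"
    then have "\<bar>f x - g x\<bar> < e/2" "\<bar>g x - peval p x\<bar> < e/2" using g p by auto
    moreover have "\<bar>f x - peval p x\<bar> \<le> \<bar>f x - g x\<bar> + \<bar>g x - peval p x\<bar>"
      using abs_triangle_ineq[of "f x - g x" "g x - peval p x"] by simp
    ultimately show "\<bar>f x - peval p x\<bar> < e" by linarith
  qed
qed

lemma zero_kboundaries: "(\<lambda>_. 0::'k::field) \<in> kboundaries p Y"
proof -
  have k1: "kbd (Suc p) (\<lambda>_. 0::'k::field) = (\<lambda>_. 0)" by (simp add: kbd_def)
  have k2: "(\<lambda>_. 0::'k) \<in> kchains (Suc p) Y" by (simp add: kchains_def)
  show ?thesis unfolding kboundaries_def by (rule image_eqI[where f="kbd (Suc p)" and x="\<lambda>_. 0", OF k1[symmetric] k2])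
qed

lemma kchains_mono: "A \<subseteq> B \<Longrightarrow> kchains p (subtopology X A) \<subseteq> kchains p (subtopology X B)"
  by (auto simp: kchains_def singular_simplex_subtopology)

lemma kcycles_mono: "A \<subseteq> B \<Longrightarrow> kcycles p (subtopology X A) \<subseteq> kcycles p (subtopology X B)"
  using kchains_mono by (fastforce simp: kcycles_def)

lemma kboundaries_mono: "A \<subseteq> B \<Longrightarrow> kboundaries p (subtopology X A) \<subseteq> kboundaries p (subtopology X B)"
  unfolding kboundaries_def by (intro image_mono kchains_mono)

lemma sublevel_shift:
  assumes "\<forall>x\<in>topspace X. \<forall>i. g x $ i \<le> f x $ i + e"
  shows "sublevel X f s \<subseteq> sublevel X g (shiftv e s)"
proof
  fix x assume "x \<in> sublevel X f s"
  then have x: "x \<in> topspace X" "\<forall>i. f x $ i < s $ i" by (auto simp: sublevel_def)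
  have "g x $ i < shiftv e s $ i" for i
  proof -
    have "g x $ i \<le> f x $ i + e" using assms x by blast
    then show ?thesis using x(2)[rule_format, of i] by (simp add: shiftv_def)
  qed
  then show "x \<in> sublevel X g (shiftv e s)" using x by (simp add: sublevel_def)
qed

lemma pm_hom_id:
  assumes "\<And>s. Z s \<subseteq> Z' s" "\<And>s. B s \<subseteq> B' s" "\<And>s. (\<lambda>_. 0) \<in> B' s"
  shows "pm_hom Z B Z' B' (\<lambda>s x. x)"
  using assms unfolding pm_hom_def by (auto simp: qsub_def)

lemma interleave:
  assumes e: "e \<ge> 0" and fg: "\<forall>x\<in>topspace X. \<forall>i. \<bar>f x $ i - g x $ i\<bar> \<le> e"
  shows "interleaved e (PH TYPE('k::field) k X f) (PH TYPE('k) k X g)"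
proof -
  have s1: "sublevel X f s \<subseteq> sublevel X g (shiftv e s)" for s
  proof (rule sublevel_shift, intro ballI allI)
    fix x i assume "x \<in> topspace X"
    then have "\<bar>f x $ i - g x $ i\<bar> \<le> e" using fg by blast
    then show "g x $ i \<le> f x $ i + e" by linarith
  qed
  have s2: "sublevel X g s \<subseteq> sublevel X f (shiftv e s)" for s
  proof (rule sublevel_shift, intro ballI allI)
    fix x i assume "x \<in> topspace X"
    then have "\<bar>f x $ i - g x $ i\<bar> \<le> e" using fg by blast
    then show "f x $ i \<le> g x $ i + e" by linarith
  qed
  have q: "qsub x x = (\<lambda>_. 0::'k)" for x :: "('x,'k) kchain" by (simp add: qsub_def)
  show ?thesis
    unfolding interleaved_def PH_def fst_conv snd_conv
    apply (rule exI[of _ "\<lambda>s x. x"], rule exI[of _ "\<lambda>s x. x"])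
    apply (intro conjI pm_hom_id kcycles_mono kboundaries_mono s1 s2 zero_kboundaries)
    apply (simp_all add: q zero_kboundaries)
    done
qed

theorem proposition5p6:
  fixes X :: "'x topology" and k :: nat
  assumes "finitely_triangulable TYPE('e::euclidean_space) X"
  shows "\<exists>D. countable D \<and> D \<subseteq> {g :: 'x \<Rightarrow> real^'n. continuous_map X euclidean g} \<and>
           (\<forall>f :: 'x \<Rightarrow> real^'n. continuous_map X euclidean f \<longrightarrow>
              (\<forall>e>0. \<exists>g\<in>D. interleaving_dist (PH TYPE('k::field) k X f) (PH TYPE('k) k X g) < ereal e))"
proof -
  obtain T :: "'e set set" where T: "triangulation T"
    and hom: "X homeomorphic_space subtopology euclidean (\<Union>T)"
    using assms unfolding finitely_triangulable_def by blast
  define K where "K = \<Union>T"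
  have "\<forall>S\<in>T. compact S" using T compact_simplex unfolding triangulation_def by blast
  then have K: "compact K" unfolding K_def using T by (intro compact_Union) (auto simp: triangulation_def)
  obtain h h' where hm: "homeomorphic_maps X (top_of_set K) h h'"
    using hom unfolding homeomorphic_space_def K_def by blast
  then have h: "continuous_map X (top_of_set K) h" and h': "continuous_map (top_of_set K) X h'"
    and hh: "\<forall>x\<in>topspace X. h' (h x) = x"
    by (auto simp: homeomorphic_maps_def)
  have hK: "\<forall>x\<in>topspace X. h x \<in> K" using h by (auto simp: continuous_map_def)
  define G where "G ps = (\<lambda>x. \<chi> i. peval (ps $ i) (h x))" for ps :: "pexpr^'n"
  have Gc: "continuous_map X euclidean (G ps)" for ps
  proof -
    have "continuous_on K (\<lambda>y. \<chi> i. peval (ps $ i) y)" by (intro continuous_on_vec_lambda peval_cont)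
    then have "continuous_map (top_of_set K) euclidean (\<lambda>y. \<chi> i. peval (ps $ i) y)" by simp
    from continuous_map_compose[OF h this] show ?thesis by (simp add: G_def o_def)
  qed
  show ?thesis
  proof (intro exI conjI allI impI)
    show "countable (range G)" by (rule countable_image) simp
    show "range G \<subseteq> {g. continuous_map X euclidean g}" using Gc by auto
    fix f :: "'x \<Rightarrow> real^'n" and e :: real
    assume f: "continuous_map X euclidean f" and e: "e > 0"
    have "\<forall>i. \<exists>p. \<forall>y\<in>K. \<bar>f (h' y) $ i - peval p y\<bar> < e/2"
    proof
      fix i
      have "continuous_map (top_of_set K) euclidean (f \<circ> h')" using continuous_map_compose[OF h' f] .
      then have "continuous_on K (\<lambda>y. f (h' y))" by (simp add: o_def)
      then have "continuous_on K (\<lambda>y. f (h' y) $ i)" by (rule continuous_on_component)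
      then show "\<exists>p. \<forall>y\<in>K. \<bar>f (h' y) $ i - peval p y\<bar> < e/2"
        using peval_approx[OF K, of "\<lambda>y. f (h' y) $ i" "e/2"] e by simp
    qed
    then obtain ps where ps: "\<forall>i. \<forall>y\<in>K. \<bar>f (h' y) $ i - peval (ps i) y\<bar> < e/2" by metis
    define pv where "pv = (\<chi> i. ps i)"
    have close: "\<forall>x\<in>topspace X. \<forall>i. \<bar>f x $ i - G pv x $ i\<bar> \<le> e/2"
    proof (intro ballI allI)
      fix x i assume x: "x \<in> topspace X"
      have "\<bar>f (h' (h x)) $ i - peval (ps i) (h x)\<bar> < e/2" using ps hK x by blast
      then show "\<bar>f x $ i - G pv x $ i\<bar> \<le> e/2" using hh x by (simp add: G_def pv_def)
    qed
    have "interleaved (e/2) (PH TYPE('k) k X f) (PH TYPE('k) k X (G pv))"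
      by (rule interleave) (use close e in auto)
    then have "ereal (e/2) \<in> {ereal e' | e'. e' \<ge> 0 \<and> interleaved e' (PH TYPE('k) k X f) (PH TYPE('k) k X (G pv))}"
      using e by (intro CollectI exI[of _ "e/2"]) auto
    then have "interleaving_dist (PH TYPE('k) k X f) (PH TYPE('k) k X (G pv)) \<le> ereal (e/2)"
      unfolding interleaving_dist_def by (rule Inf_lower)
    also have "\<dots> < ereal e" using e by simp
    finally show "\<exists>g\<in>range G. interleaving_dist (PH TYPE('k) k X f) (PH TYPE('k) k X g) < ereal e"
      by blast
  qed
qed

end
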